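(* Let $n\ge2$ and $k\ge1$ be integers and $z_1,\dots,z_n$ indeterminates. Then \[ \sum_{\beta\in\mathrm{Pairs}(k,n)}\det(R_3(\beta))^2=n^{k-1}\sum_{b\in C(k+1,n)}D(z(b))^2 . \]
   Context: $\mathrm{Pairs}(k,n)$ is the set of multisets $\beta$ of $k$ pairs $\{\beta(v,1),\beta(v,2)\}$ with $1\le\beta(v,1)<\beta(v,2)\le n$. For $\beta$ listed in some order $\beta(1),\dots,\beta(k)$, $R_3(\beta)$ is the $k\times k$ matrix with entries $R_3(\beta)_{u,v}=z_{\beta(v,1)}^u-z_{\beta(v,2)}^u$ ($1\le u,v\le k$); $\det(R_3(\beta))^2$ is independent of the order. $C(k+1,n)$ is the set of $(k+1)$-element subsets $b=\{b_1<\dots<b_{k+1}\}$ of $\{1,\dots,n\}$ (empty if $k+1>n$), $z(b)=(z_{b_1},\dots,z_{b_{k+1}})$ and $D(x_1,\dots,x_m)=\prod_{1\le i<j\le m}(x_j-x_i)$. *)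

theory Defs
  imports "HOL-Library.Multiset" "HOL-Library.Product_Lexorder" "Jordan_Normal_Form.Determinant"
begin

definition Pairs :: "nat \<Rightarrow> nat \<Rightarrow> (nat \<times> nat) multiset set" where
  "Pairs k n = {\<beta>. size \<beta> = k \<and> set_mset \<beta> \<subseteq> {(i,j). 1 \<le> i \<and> i < j \<and> j \<le> n}}"

text \<open>R_3 for beta listed as bs = [beta(1),...,beta(k)]; entry (u,v) (1-based) is
  z_{beta(v,1)}^u - z_{beta(v,2)}^u; matrix indices here are 0-based.\<close>
definition R3 :: "(nat \<Rightarrow> 'a::comm_ring_1) \<Rightarrow> (nat \<times> nat) list \<Rightarrow> 'a mat" where
  "R3 z bs = mat (length bs) (length bs)
     (\<lambda>(u,v). z (fst (bs ! v)) ^ (u+1) - z (snd (bs ! v)) ^ (u+1))"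

definition Cset :: "nat \<Rightarrow> nat \<Rightarrow> nat set set" where
  "Cset m n = {b. b \<subseteq> {1..n} \<and> card b = m}"

definition Dz :: "(nat \<Rightarrow> 'a::comm_ring_1) \<Rightarrow> nat set \<Rightarrow> 'a" where
  "Dz z b = (\<Prod>(i,j)\<in>{(i,j). i \<in> b \<and> j \<in> b \<and> i < j}. z j - z i)"

end

theory Submission
  imports Defs "HOL-Computational_Algebra.Polynomial"
begin

definition detf :: "nat \<Rightarrow> (nat \<Rightarrow> nat \<Rightarrow> 'a::comm_ring_1) \<Rightarrow> 'a" where
  "detf k X = (\<Sum>p \<in> {p. p permutes {0..<k}}. signof p * (\<Prod>i=0..<k. X i (p i)))"

lemma det_mat_detf: "det (mat k k (\<lambda>(i,j). X i j)) = detf k X"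
  unfolding detf_def
  by (subst det_def'[of _ k]) (auto intro!: sum.cong prod.cong simp: permutes_in_image)

lemma detf_cong: "(\<And>i j. i < k \<Longrightarrow> j < k \<Longrightarrow> X i j = Y i j) \<Longrightarrow> detf k X = detf k Y"
  unfolding detf_def
  by (auto intro!: sum.cong prod.cong simp: permutes_in_image)

lemma detf_identical_rows:
  assumes "i < k" "j < k" "i \<noteq> j" "\<And>v. v < k \<Longrightarrow> X i v = X j v"
  shows "detf k X = 0"
proof -
  have "det (mat k k (\<lambda>(i,j). X i j)) = 0"
    by (rule det_identical_rows[of _ k i j]) (use assms in \<open>auto intro!: eq_vecI\<close>)
  thus ?thesis by (simp add: det_mat_detf)
qed

lemma detf_permute_rows:
  assumes p: "p permutes {0..<k}"
  shows "detf k (\<lambda>u v. X (p u) v) = signof p * detf k X"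
proof -
  let ?A = "mat k k (\<lambda>(i,j). X i j)"
  have "det (mat k k (\<lambda>(i,j). ?A $$ (p i, j))) = signof p * det ?A"
    by (rule det_permute_rows[OF _ p]) auto
  moreover have "mat k k (\<lambda>(i,j). ?A $$ (p i, j)) = mat k k (\<lambda>(i,j). X (p i) j)"
    using p by (auto intro!: eq_matI simp: permutes_in_image)
  ultimately show ?thesis by (simp add: det_mat_detf)
qed

lemma cauchy_binet:
  fixes a b :: "nat \<Rightarrow> 'b::linorder \<Rightarrow> 'a::comm_ring_1"
  assumes T: "finite T"
  shows "detf k (\<lambda>u v. \<Sum>t\<in>T. a u t * b v t) =
     (\<Sum>S \<in> {S. S \<subseteq> T \<and> card S = k}. detf k (\<lambda>u v. a u (sorted_list_of_set S ! v))
        * detf k (\<lambda>u v. b v (sorted_list_of_set S ! u)))"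
proof -
  define K where "K = {0..<k}"
  define P where "P = {p. p permutes K}"
  define F where "F = PiE K (\<lambda>_. T)"
  define G where "G = (\<lambda>f. detf k (\<lambda>u v. b v (f u)))"
  define Fi where "Fi = {f \<in> F. inj_on f K}"
  define SS where "SS = {S. S \<subseteq> T \<and> card S = k}"
  define sl where "sl = (\<lambda>S. sorted_list_of_set (S::'b set))"
  have finK: "finite K" by (simp add: K_def)
  have finF: "finite F" unfolding F_def using T finK by (simp add: finite_PiE)
  have finP: "finite P" unfolding P_def using finK by (simp add: finite_permutations)
  have "detf k (\<lambda>u v. \<Sum>t\<in>T. a u t * b v t)
      = (\<Sum>p\<in>P. signof p * (\<Sum>f\<in>F. \<Prod>u\<in>K. a u (f u) * b (p u) (f u)))"
    unfolding detf_def P_def F_def K_def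
    by (intro sum.cong refl arg_cong2[where f="(*)"] prod_sum_PiE) (use T in auto)
  also have "\<dots> = (\<Sum>f\<in>F. (\<Prod>u\<in>K. a u (f u)) * G f)"
    unfolding G_def detf_def sum_distrib_left K_def P_def
    by (subst sum.swap) (auto intro!: sum.cong simp: prod.distrib ac_simps)
  also have "\<dots> = (\<Sum>f\<in>Fi. (\<Prod>u\<in>K. a u (f u)) * G f)"
  proof (rule sum.mono_neutral_right[OF finF])
    show "Fi \<subseteq> F" unfolding Fi_def by auto
    show "\<forall>f\<in>F - Fi. (\<Prod>u\<in>K. a u (f u)) * G f = 0"
    proof
      fix f assume "f \<in> F - Fi"
      then obtain i j where "i \<in> K" "j \<in> K" "i \<noteq> j" "f i = f j"
        unfolding Fi_def inj_on_def by auto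
      hence "G f = 0" unfolding G_def K_def
        by (intro detf_identical_rows[of i k j]) auto
      thus "(\<Prod>u\<in>K. a u (f u)) * G f = 0" by simp
    qed
  qed
  also have "\<dots> = (\<Sum>(S,p)\<in>Sigma SS (\<lambda>_. P).
      (\<Prod>u\<in>K. a u (sl S ! p u)) * (signof p * G (\<lambda>u. sl S ! u)))"
  proof -
    define phi where "phi = (\<lambda>(S,p). restrict (\<lambda>u. sl S ! p u) K)"
    define psi where "psi = (\<lambda>f. (f ` K, \<lambda>u. if u \<in> K then inv_into K ((!) (sl (f ` K))) (f u) else u))"
    have slS: "length (sl S) = k" "distinct (sl S)" "set (sl S) = S" if "S \<in> SS" for S
    proof -
      have "finite S" using that T unfolding SS_def by (auto intro: finite_subset)
      thus "length (sl S) = k" "distinct (sl S)" "set (sl S) = S"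
        using that unfolding SS_def sl_def by auto
    qed
    have bij: "bij_betw ((!) (sl S)) K S" if "S \<in> SS" for S
      using bij_betw_nth[of "sl S" K S] slS[OF that] unfolding K_def by (auto simp: atLeast0LessThan)
    have W3: "phi (psi f) = f" and W4: "psi f \<in> Sigma SS (\<lambda>_. P)" if f: "f \<in> Fi" for f
    proof -
      let ?S = "f ` K"
      have S: "?S \<in> SS" using f unfolding Fi_def F_def SS_def K_def
        by (auto simp: card_image)
      have bS: "bij_betw ((!) (sl ?S)) K ?S" by (rule bij[OF S])
      show "phi (psi f) = f" unfolding phi_def psi_def
        using f bS unfolding Fi_def F_def
        by (auto simp: restrict_def PiE_def extensional_def bij_betw_def f_inv_into_f)
      show "psi f \<in> Sigma SS (\<lambda>_. P)" unfolding psi_def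
      proof (simp add: S P_def, rule inj_on_nat_permutes)
        show "inj_on (\<lambda>u. if u \<in> K then inv_into K ((!) (sl ?S)) (f u) else u) K"
        proof (rule inj_onI)
          fix x y assume xy: "x \<in> K" "y \<in> K" and
            eq: "(if x \<in> K then inv_into K ((!) (sl ?S)) (f x) else x) = (if y \<in> K then inv_into K ((!) (sl ?S)) (f y) else y)"
          have im: "(!) (sl ?S) ` K = ?S" using bS by (simp add: bij_betw_def)
          have "f x = sl ?S ! inv_into K ((!) (sl ?S)) (f x)"
            using xy im by (simp add: f_inv_into_f)
          also have "\<dots> = sl ?S ! inv_into K ((!) (sl ?S)) (f y)" using eq xy by simp
          also have "\<dots> = f y" using xy im by (simp add: f_inv_into_f)
          finally show "x = y" using f xy unfolding Fi_def inj_on_def by blast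
        qed
        show "(\<lambda>u. if u \<in> K then inv_into K ((!) (sl ?S)) (f u) else u) \<in> K \<rightarrow> K"
          using bS by (auto simp: bij_betw_def inv_into_into)
      qed (auto simp: finK)
    qed
    have W1: "psi (phi Sp) = Sp" and W2: "phi Sp \<in> Fi"
      and W5: "(\<Prod>u\<in>K. a u (phi Sp u)) * G (phi Sp) =
          (case Sp of (S, p) \<Rightarrow> (\<Prod>u\<in>K. a u (sl S ! p u)) * (signof p * G (\<lambda>u. sl S ! u)))"
      if Sp: "Sp \<in> Sigma SS (\<lambda>_. P)" for Sp
    proof -
      from Sp obtain S p where Sp: "Sp = (S,p)" and S: "S \<in> SS" and p: "p permutes K"
        unfolding P_def by auto
      have bS: "bij_betw ((!) (sl S)) K S" by (rule bij[OF S])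
      have pK: "p ` K = K" by (rule permutes_image[OF p])
      have img: "restrict (\<lambda>u. sl S ! p u) K ` K = S"
      proof -
        have "restrict (\<lambda>u. sl S ! p u) K ` K = (!) (sl S) ` (p ` K)" by auto
        also have "\<dots> = S" using pK bS by (simp add: bij_betw_def)
        finally show ?thesis .
      qed
      show "psi (phi Sp) = Sp"
      proof -
        have e: "phi Sp ` K = S" using img unfolding Sp phi_def by simp
        have "(\<lambda>u. if u \<in> K then inv_into K ((!) (sl S)) (phi Sp u) else u) = p"
        proof
          fix u show "(if u \<in> K then inv_into K ((!) (sl S)) (phi Sp u) else u) = p u"
            by (cases "u \<in> K") (use bS p in \<open>auto simp: Sp phi_def bij_betw_def inv_into_f_f permutes_in_image permutes_not_in\<close>)
        qed
        thus ?thesis unfolding psi_def e by (simp add: Sp)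
      qed
      show "phi Sp \<in> Fi"
      proof -
        have "restrict (\<lambda>u. sl S ! p u) K \<in> PiE K (\<lambda>_. T)"
          using bS p S unfolding SS_def bij_betw_def by (auto simp: permutes_in_image)
        moreover have "inj_on (restrict (\<lambda>u. sl S ! p u) K) K"
        proof (rule inj_onI)
          fix x y assume xy: "x \<in> K" "y \<in> K" "restrict (\<lambda>u. sl S ! p u) K x = restrict (\<lambda>u. sl S ! p u) K y"
          hence "sl S ! p x = sl S ! p y" by simp
          moreover have "p x \<in> K" "p y \<in> K" using xy p by (auto simp: permutes_in_image)
          ultimately have "p x = p y" using bS unfolding bij_betw_def inj_on_def by blast
          thus "x = y" using permutes_inj[OF p] by (simp add: inj_eq)
        qed
        ultimately show ?thesis unfolding Sp Fi_def F_def phi_def by simp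
      qed
      have "G (restrict (\<lambda>u. sl S ! p u) K) = G (\<lambda>u. sl S ! p u)"
        unfolding G_def K_def by (rule detf_cong) auto
      also have "\<dots> = signof p * G (\<lambda>u. sl S ! u)"
        unfolding G_def using detf_permute_rows[of p k "\<lambda>u v. b v (sl S ! u)"] p
        unfolding K_def by simp
      finally show "(\<Prod>u\<in>K. a u (phi Sp u)) * G (phi Sp) =
          (case Sp of (S, p) \<Rightarrow> (\<Prod>u\<in>K. a u (sl S ! p u)) * (signof p * G (\<lambda>u. sl S ! u)))"
        unfolding Sp phi_def by simp
    qed
    show ?thesis
      by (rule sym, rule sum.reindex_bij_witness[where j = phi and i = psi])
        (use W1 W2 W3 W4 W5 in auto)
  qed
  also have "\<dots> = (\<Sum>S\<in>SS. \<Sum>p\<in>P. (\<Prod>u\<in>K. a u (sl S ! p u)) * (signof p * G (\<lambda>u. sl S ! u)))"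
  proof (rule sum.Sigma[symmetric])
    show "finite SS" unfolding SS_def using T by (rule finite_subset[rotated, OF finite_Pow_iff[THEN iffD2]]) auto
  qed (use finP in auto)
  also have "\<dots> = (\<Sum>S\<in>SS. detf k (\<lambda>u v. a u (sl S ! v)) * G (\<lambda>u. sl S ! u))"
    unfolding detf_def sum_distrib_right K_def P_def
    by (auto intro!: sum.cong simp: ac_simps)
  finally show ?thesis unfolding SS_def G_def sl_def by simp
qed

lemma detf_0[simp]: "detf 0 X = 1"
  using det_mat_detf[of 0 X] by (simp add: det_dim_zero)

lemma detf_col_scale:
  "detf k (\<lambda>i j. Y i j * c j) = (\<Prod>j=0..<k. c j) * detf k Y"
proof -
  have "signof p * (\<Prod>i=0..<k. Y i (p i) * c (p i)) = (\<Prod>j=0..<k. c j) * (signof p * (\<Prod>i=0..<k. Y i (p i)))"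
    if p: "p permutes {0..<k}" for p
  proof -
    have "(\<Prod>i=0..<k. c (p i)) = (\<Prod>j=0..<k. c j)"
      using prod.permute[OF p, of c] by (simp add: o_def)
    thus ?thesis by (simp add: prod.distrib ac_simps)
  qed
  thus ?thesis unfolding detf_def sum_distrib_left by (auto intro!: sum.cong)
qed

lemma detf_first_col:
  assumes "\<And>i. 0 < i \<Longrightarrow> i < Suc m \<Longrightarrow> X i 0 = 0"
  shows "detf (Suc m) X = X 0 0 * detf m (\<lambda>i j. X (Suc i) (Suc j))"
proof -
  let ?A1 = "mat 1 1 (\<lambda>_. X 0 0)"
  let ?A2 = "mat 1 m (\<lambda>(_,j). X 0 (Suc j))"
  let ?A4 = "mat m m (\<lambda>(i,j). X (Suc i) (Suc j))"
  have eq: "mat (Suc m) (Suc m) (\<lambda>(i,j). X i j) = four_block_mat ?A1 ?A2 (0\<^sub>m m 1) ?A4"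
    by (rule eq_matI) (use assms in \<open>auto simp: less_Suc_eq_0_disj\<close>)
  have "det (four_block_mat ?A1 ?A2 (0\<^sub>m m 1) ?A4) = det ?A1 * det ?A4"
    by (rule det_four_block_mat_lower_left_zero_col) auto
  moreover have "det ?A1 = X 0 0" by (subst det_single) auto
  ultimately show ?thesis using eq det_mat_detf by metis
qed

lemma vandermonde:
  "detf m (\<lambda>i j. x j ^ i) = (\<Prod>j<m. \<Prod>i<j. x j - x i)"
proof (induction m arbitrary: x)
  case 0
  then show ?case by simp
next
  case (Suc m)
  let ?n = "Suc m"
  define V where "V = mat ?n ?n (\<lambda>(i,j). x j ^ i)"
  define L where "L = mat ?n ?n (\<lambda>(i,j). if i = j then 1 else if i = Suc j then - x 0 else 0)"
  have V: "V \<in> carrier_mat ?n ?n" and L: "L \<in> carrier_mat ?n ?n" unfolding V_def L_def by auto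
  have detL: "det L = 1"
  proof -
    have "det L = prod_list (diag_mat L)"
      by (rule det_lower_triangular[OF _ L]) (auto simp: L_def)
    also have "\<dots> = 1" unfolding prod_list_diag_prod by (auto simp: L_def intro!: prod.neutral)
    finally show ?thesis .
  qed
  have LV: "L * V = mat ?n ?n (\<lambda>(i,j). if i = 0 then 1 else x j ^ (i - 1) * (x j - x 0))"
  proof (rule eq_matI)
    fix i j assume ij: "i < dim_row (mat ?n ?n (\<lambda>(i,j). if i = 0 then 1 else x j ^ (i - 1) * (x j - x 0)))"
       "j < dim_col (mat ?n ?n (\<lambda>(i,j). if i = 0 then 1 else x j ^ (i - 1) * (x j - x 0)))"
    hence i: "i < ?n" and j: "j < ?n" by auto
    have "(L * V) $$ (i,j) = (\<Sum>l = 0..<?n. (if i = l then 1 else if i = Suc l then - x 0 else 0) * x j ^ l)"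
      using i j L V by (simp add: L_def V_def scalar_prod_def)
    also have "\<dots> = (\<Sum>l = 0..<?n. (if l = i then x j ^ l else 0)) + (\<Sum>l = 0..<?n. (if Suc l = i then - x 0 * x j ^ l else 0))"
      unfolding sum.distrib[symmetric] by (rule sum.cong) auto
    also have "\<dots> = (if i = 0 then 1 else x j ^ (i - 1) * (x j - x 0))"
    proof (cases i)
      case 0 thus ?thesis using i by simp
    next
      case (Suc i')
      have "(\<Sum>l = 0..<?n. (if Suc l = i then - x 0 * x j ^ l else 0)) = (\<Sum>l = 0..<?n. (if l = i' then - x 0 * x j ^ l else 0))"
        using Suc by (intro sum.cong) auto
      also have "\<dots> = - x 0 * x j ^ i'" using Suc i by simp
      moreover have "(\<Sum>l = 0..<?n. (if l = i then x j ^ l else 0)) = x j ^ i" using i by simp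
      ultimately show ?thesis using Suc by (simp add: algebra_simps)
    qed
    finally show "(L * V) $$ (i,j) = mat ?n ?n (\<lambda>(i,j). if i = 0 then 1 else x j ^ (i - 1) * (x j - x 0)) $$ (i,j)"
      using i j by simp
  qed (use L V in auto)
  have "detf ?n (\<lambda>i j. x j ^ i) = det V" unfolding V_def by (simp add: det_mat_detf)
  also have "\<dots> = det (L * V)" using det_mult[OF L V] detL by simp
  also have "\<dots> = detf ?n (\<lambda>i j. if i = 0 then 1 else x j ^ (i - 1) * (x j - x 0))"
    unfolding LV by (simp add: det_mat_detf)
  also have "\<dots> = detf m (\<lambda>i j. x (Suc j) ^ i * (x (Suc j) - x 0))"
    by (subst detf_first_col) auto
  also have "\<dots> = (\<Prod>j=0..<m. x (Suc j) - x 0) * detf m (\<lambda>i j. x (Suc j) ^ i)"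
    by (rule detf_col_scale)
  also have "\<dots> = (\<Prod>j<m. x (Suc j) - x 0) * (\<Prod>j<m. \<Prod>i<j. x (Suc j) - x (Suc i))"
    using Suc.IH[of "\<lambda>j. x (Suc j)"] by (simp add: atLeast0LessThan)
  also have "\<dots> = (\<Prod>j<?n. \<Prod>i<j. x j - x i)"
    unfolding prod.lessThan_Suc_shift by (simp add: prod.distrib)
  finally show ?case .
qed

lemma chio_weak:
  fixes f :: "nat \<Rightarrow> nat \<Rightarrow> 'a::comm_ring_1"
  shows "f 0 0 * detf k (\<lambda>i j. f 0 0 * f (Suc i) (Suc j) - f (Suc i) 0 * f 0 (Suc j))
       = f 0 0 ^ k * detf (Suc k) f"
proof -
  let ?n = "Suc k"
  let ?a = "f 0 0"
  define F where "F = mat ?n ?n (\<lambda>(i,j). f i j)"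
  define M where "M = mat ?n ?n (\<lambda>(i,j). if i = 0 then (if j = 0 then 1 else 0)
       else if j = i then ?a else if j = 0 then - f i 0 else 0)"
  define g where "g = (\<lambda>i j. if i = 0 then f 0 j else ?a * f i j - f i 0 * f 0 j)"
  have F: "F \<in> carrier_mat ?n ?n" and M: "M \<in> carrier_mat ?n ?n" unfolding F_def M_def by auto
  have detM: "det M = ?a ^ k"
  proof -
    have "det M = prod_list (diag_mat M)"
      by (rule det_lower_triangular[OF _ M]) (auto simp: M_def)
    also have "\<dots> = (\<Prod>i=0..<?n. if i = 0 then 1 else ?a)"
    proof -
      have "M $$ (i,i) = (if i = 0 then 1 else ?a)" if "i \<in> {0..<?n}" for i
        using that by (simp add: M_def)
      thus ?thesis unfolding prod_list_diag_prod using M by (intro prod.cong) auto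
    qed
    also have "\<dots> = ?a ^ k"
      by (simp only: prod.atLeast0_lessThan_Suc_shift) simp
    finally show ?thesis .
  qed
  have MF: "M * F = mat ?n ?n (\<lambda>(i,j). g i j)"
  proof (rule eq_matI)
    fix i j assume "i < dim_row (mat ?n ?n (\<lambda>(i,j). g i j))" "j < dim_col (mat ?n ?n (\<lambda>(i,j). g i j))"
    hence i: "i < ?n" and j: "j < ?n" by auto
    have "(M * F) $$ (i,j) = (\<Sum>l = 0..<?n. (if i = 0 then (if l = 0 then 1 else 0)
       else if l = i then ?a else if l = 0 then - f i 0 else 0) * f l j)"
      using i j M F by (simp add: M_def F_def scalar_prod_def)
    also have "\<dots> = g i j"
    proof (cases "i = 0")
      case True
      hence "(\<Sum>l = 0..<?n. (if i = 0 then (if l = 0 then 1 else 0)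
       else if l = i then ?a else if l = 0 then - f i 0 else 0) * f l j) = (\<Sum>l = 0..<?n. if l = 0 then f 0 j else 0)"
        by (intro sum.cong) auto
      also have "\<dots> = f 0 j" by (simp del: sum.atLeast0_lessThan_Suc)
      finally show ?thesis using True by (simp add: g_def)
    next
      case False
      have "(\<Sum>l = 0..<?n. (if i = 0 then (if l = 0 then 1 else 0)
       else if l = i then ?a else if l = 0 then - f i 0 else 0) * f l j)
        = (\<Sum>l = 0..<?n. (if l = i then ?a * f l j else 0) + (if l = 0 then - f i 0 * f l j else 0))"
        using False by (intro sum.cong) auto
      also have "\<dots> = ?a * f i j - f i 0 * f 0 j"
        using i by (simp add: sum.distrib)
      finally show ?thesis using False by (simp add: g_def)
    qed
    finally show "(M * F) $$ (i,j) = mat ?n ?n (\<lambda>(i,j). g i j) $$ (i,j)" using i j by simp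
  qed (use M F in auto)
  have "?a ^ k * detf ?n f = det (M * F)"
    using det_mult[OF M F] detM by (simp add: F_def det_mat_detf)
  also have "\<dots> = detf ?n g" unfolding MF by (simp add: det_mat_detf)
  also have "\<dots> = g 0 0 * detf k (\<lambda>i j. g (Suc i) (Suc j))"
    by (rule detf_first_col) (simp add: g_def)
  also have "g 0 0 = ?a" by (simp add: g_def)
  finally show ?thesis by (simp add: g_def)
qed

lemma poly_detf: "poly (detf k X) c = detf k (\<lambda>i j. poly (X i j) c)"
  unfolding detf_def by (simp add: poly_sum poly_prod)

lemma monic_lin_cancel:
  fixes p :: "'a::comm_ring_1 poly"
  assumes "[:a, 1:] * p = 0" shows "p = 0"
proof (rule ccontr)
  assume p: "p \<noteq> 0"
  have "coeff ([:a, 1:] * p) (degree [:a, 1:] + degree p) = coeff [:a, 1:] (degree [:a, 1:]) * coeff p (degree p)"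
    by (rule coeff_mult_degree_sum)
  also have "\<dots> = lead_coeff p" by simp
  finally have "coeff ([:a, 1:] * p) (degree [:a, 1:] + degree p) = lead_coeff p" .
  hence "lead_coeff p = 0" unfolding assms by simp
  with p show False by simp
qed

lemma chio:
  fixes f :: "nat \<Rightarrow> nat \<Rightarrow> 'a::comm_ring_1"
  assumes k: "k \<ge> 1"
  shows "detf k (\<lambda>i j. f 0 0 * f (Suc i) (Suc j) - f (Suc i) 0 * f 0 (Suc j))
       = f 0 0 ^ (k - 1) * detf (Suc k) f"
proof -
  define f' where "f' = (\<lambda>i j. if i = 0 \<and> j = 0 then [:f 0 0, 1:] else [:f i j:])"
  define A where "A = f' 0 0"
  define C' where "C' = detf k (\<lambda>i j. f' 0 0 * f' (Suc i) (Suc j) - f' (Suc i) 0 * f' 0 (Suc j))"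
  define D' where "D' = detf (Suc k) f'"
  have A: "A = [:f 0 0, 1:]" by (simp add: A_def f'_def)
  have "A * C' = A ^ k * D'"
    unfolding A_def C'_def D'_def by (rule chio_weak)
  also have "A ^ k = A * A ^ (k - 1)" using k by (cases k) auto
  finally have "A * C' = A * (A ^ (k - 1) * D')" by (simp only: mult.assoc)
  hence "A * (C' - A ^ (k - 1) * D') = 0" by (simp only: right_diff_distrib diff_self)
  hence "[:f 0 0, 1:] * (C' - A ^ (k - 1) * D') = 0" by (simp only: A)
  hence "C' - A ^ (k - 1) * D' = 0" by (rule monic_lin_cancel)
  hence "C' = A ^ (k - 1) * D'" by (simp only: right_minus_eq)
  hence "poly C' 0 = poly (A ^ (k - 1) * D') 0" by (rule arg_cong)
  moreover have "poly C' 0 = detf k (\<lambda>i j. f 0 0 * f (Suc i) (Suc j) - f (Suc i) 0 * f 0 (Suc j))"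
    unfolding C'_def poly_detf by (rule detf_cong) (simp add: f'_def)
  moreover have "poly D' 0 = detf (Suc k) f"
    unfolding D'_def poly_detf by (rule detf_cong) (simp add: f'_def)
  moreover have "poly A 0 = f 0 0" by (simp add: A)
  ultimately show ?thesis by (simp only: poly_mult poly_power)
qed

lemma detf_transpose: "detf k (\<lambda>i j. X j i) = detf k X"
proof -
  have "transpose_mat (mat k k (\<lambda>(i,j). X i j)) = mat k k (\<lambda>(i,j). X j i)"
    by (rule eq_matI) auto
  hence "det (mat k k (\<lambda>(i,j). X j i)) = det (mat k k (\<lambda>(i,j). X i j))"
    using det_transpose[of "mat k k (\<lambda>(i,j). X i j)" k] by simp
  thus ?thesis by (simp add: det_mat_detf)
qed

definition PP :: "nat \<Rightarrow> (nat \<times> nat) set" where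
  "PP n = {(i,j). 1 \<le> i \<and> i < j \<and> j \<le> n}"

lemma PP_finite: "finite (PP n)"
  by (rule finite_subset[of _ "{1..n} \<times> {1..n}"]) (auto simp: PP_def)

lemma PP_Suc: "PP (Suc n) = PP n \<union> (\<lambda>i. (i, Suc n)) ` {1..n}"
  by (auto simp: PP_def)

lemma pair_sum:
  fixes \<alpha> \<beta> :: "nat \<Rightarrow> 'a::comm_ring_1"
  shows "(\<Sum>(i,j)\<in>PP n. (\<alpha> i - \<alpha> j) * (\<beta> i - \<beta> j))
    = of_nat n * (\<Sum>i=1..n. \<alpha> i * \<beta> i) - (\<Sum>i=1..n. \<alpha> i) * (\<Sum>i=1..n. \<beta> i)"
proof (induction n)
  case 0
  have "PP 0 = {}" by (auto simp: PP_def)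
  then show ?case by simp
next
  case (Suc n)
  have d: "PP n \<inter> (\<lambda>i. (i, Suc n)) ` {1..n} = {}" by (auto simp: PP_def)
  have "(\<Sum>(i,j)\<in>PP (Suc n). (\<alpha> i - \<alpha> j) * (\<beta> i - \<beta> j))
     = (\<Sum>(i,j)\<in>PP n. (\<alpha> i - \<alpha> j) * (\<beta> i - \<beta> j))
       + (\<Sum>(i,j)\<in>(\<lambda>i. (i, Suc n)) ` {1..n}. (\<alpha> i - \<alpha> j) * (\<beta> i - \<beta> j))"
    unfolding PP_Suc by (rule sum.union_disjoint) (use d PP_finite in auto)
  also have "(\<Sum>(i,j)\<in>(\<lambda>i. (i, Suc n)) ` {1..n}. (\<alpha> i - \<alpha> j) * (\<beta> i - \<beta> j))
      = (\<Sum>i=1..n. (\<alpha> i - \<alpha> (Suc n)) * (\<beta> i - \<beta> (Suc n)))"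
    by (subst sum.reindex) (auto simp: inj_on_def)
  also have "\<dots> = (\<Sum>i=1..n. \<alpha> i * \<beta> i) - \<beta> (Suc n) * (\<Sum>i=1..n. \<alpha> i)
      - \<alpha> (Suc n) * (\<Sum>i=1..n. \<beta> i) + of_nat n * (\<alpha> (Suc n) * \<beta> (Suc n))"
    by (simp add: algebra_simps sum.distrib sum_subtractf sum_distrib_left)
  finally show ?case unfolding Suc.IH
    by (simp add: algebra_simps)
qed

lemma Dz_sorted:
  assumes b: "finite b" "card b = m"
  shows "Dz z b = (\<Prod>j<m. \<Prod>i<j. z (sorted_list_of_set b ! j) - z (sorted_list_of_set b ! i))"
proof -
  define s where "s = sorted_list_of_set b"
  have len: "length s = m" and set: "set s = b" and sw: "sorted_wrt (<) s" and dist: "distinct s"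
    using b by (auto simp: s_def strict_sorted_list_of_set)
  have lt: "s ! i < s ! j" if "i < j" "j < m" for i j
    using sorted_wrt_nth_less[OF sw that(1)] that len by simp
  have lt2: "i < j" if "s ! i < s ! j" "i < m" "j < m" for i j
  proof (rule ccontr)
    assume "\<not> i < j"
    hence "j < i \<or> j = i" by auto
    thus False using lt[of j i] that by auto
  qed
  define D where "D = (SIGMA j:{..<m}. {..<j})"
  define h where "h = (\<lambda>(j,i). (s ! i, s ! j))"
  have Q: "{(i,j). i \<in> b \<and> j \<in> b \<and> i < j} = h ` D"
  proof (intro equalityI subsetI)
    fix x assume "x \<in> {(i,j). i \<in> b \<and> j \<in> b \<and> i < j}"
    then obtain x1 x2 where x: "x = (x1,x2)" "x1 \<in> set s" "x2 \<in> set s" "x1 < x2" using set by auto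
    then obtain i j where ij: "i < m" "j < m" "x1 = s ! i" "x2 = s ! j"
      using len by (auto simp: in_set_conv_nth)
    hence "i < j" using lt2 x by auto
    thus "x \<in> h ` D" using ij x unfolding D_def h_def by force
  next
    fix x assume "x \<in> h ` D"
    then obtain i j where "x = (s ! i, s ! j)" "j < m" "i < j" unfolding D_def h_def by auto
    thus "x \<in> {(i,j). i \<in> b \<and> j \<in> b \<and> i < j}" using lt[of i j] len set by auto
  qed
  have inj: "inj_on h D"
  proof (rule inj_onI)
    fix x y assume "x \<in> D" "y \<in> D" "h x = h y"
    thus "x = y" unfolding D_def h_def using dist len
      by (auto simp: nth_eq_iff_index_eq)
  qed
  have "Dz z b = (\<Prod>(i,j)\<in>h ` D. z j - z i)" unfolding Dz_def Q ..
  also have "\<dots> = (\<Prod>(j,i)\<in>D. z (s ! j) - z (s ! i))"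
    by (subst prod.reindex[OF inj]) (auto simp: h_def intro!: prod.cong)
  also have "\<dots> = (\<Prod>j<m. \<Prod>i<j. z (s ! j) - z (s ! i))"
    unfolding D_def by (rule prod.Sigma[symmetric]) auto
  finally show ?thesis unfolding s_def .
qed

lemma Pairs_reduce:
  fixes g :: "(nat \<times> nat) list \<Rightarrow> 'a::comm_ring_1"
  assumes zero: "\<And>xs. \<not> distinct xs \<Longrightarrow> g xs = 0"
  shows "(\<Sum>\<beta>\<in>Pairs k n. g (sorted_list_of_multiset \<beta>))
       = (\<Sum>S\<in>{S. S \<subseteq> PP n \<and> card S = k}. g (sorted_list_of_set S))"
proof -
  let ?SS = "{S. S \<subseteq> PP n \<and> card S = k}"
  have PairsPP: "Pairs k n = {\<beta>. size \<beta> = k \<and> set_mset \<beta> \<subseteq> PP n}"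
    unfolding Pairs_def PP_def ..
  have fin: "finite (Pairs k n)"
  proof (rule finite_subset)
    show "Pairs k n \<subseteq> mset ` {xs. set xs \<subseteq> PP n \<and> length xs = k}"
    proof
      fix \<beta> assume "\<beta> \<in> Pairs k n"
      show "\<beta> \<in> mset ` {xs. set xs \<subseteq> PP n \<and> length xs = k}"
proof (rule image_eqI[where x = "sorted_list_of_multiset \<beta>"])
        have l: "length (sorted_list_of_multiset \<beta>) = size \<beta>"
          by (metis size_mset mset_sorted_list_of_multiset)
        have s: "set (sorted_list_of_multiset \<beta>) = set_mset \<beta>" by simp
        show "sorted_list_of_multiset \<beta> \<in> {xs. set xs \<subseteq> PP n \<and> length xs = k}"
          using \<open>\<beta> \<in> Pairs k n\<close> l s unfolding PairsPP by simp
      qed simp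
    qed
    show "finite (mset ` {xs. set xs \<subseteq> PP n \<and> length xs = k})"
      by (intro finite_imageI finite_lists_length_eq PP_finite)
  qed
  have finS: "finite S" if "S \<in> ?SS" for S using that PP_finite by (auto intro: finite_subset)
  have sub: "mset_set ` ?SS \<subseteq> Pairs k n"
proof (rule image_subsetI)
    fix S assume S: "S \<in> ?SS"
    show "mset_set S \<in> Pairs k n" unfolding PairsPP using S finS[OF S] by simp
  qed
  have "(\<Sum>\<beta>\<in>Pairs k n. g (sorted_list_of_multiset \<beta>))
      = (\<Sum>\<beta>\<in>mset_set ` ?SS. g (sorted_list_of_multiset \<beta>))"
  proof (rule sum.mono_neutral_right[OF fin sub])
    show "\<forall>\<beta>\<in>Pairs k n - mset_set ` ?SS. g (sorted_list_of_multiset \<beta>) = 0"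
    proof
      fix \<beta> assume b: "\<beta> \<in> Pairs k n - mset_set ` ?SS"
      show "g (sorted_list_of_multiset \<beta>) = 0"
      proof (rule zero, rule notI)
        let ?xs = "sorted_list_of_multiset \<beta>"
        assume d: "distinct ?xs"
        have "\<beta> = mset ?xs" by simp
        also have "\<dots> = mset_set (set ?xs)" by (simp only: mset_set_set[OF d])
        finally have e: "\<beta> = mset_set (set ?xs)" .
        have "set ?xs \<in> ?SS"
proof -
          have l: "length ?xs = size \<beta>"
            by (metis size_mset mset_sorted_list_of_multiset)
          have s: "set ?xs = set_mset \<beta>" by simp
          have "card (set ?xs) = k" using distinct_card[OF d] l b unfolding PairsPP by simp
          thus ?thesis using s b unfolding PairsPP by simp
        qed
        thus False using b e by auto
      qed
    qed
  qed
  also have "\<dots> = (\<Sum>S\<in>?SS. g (sorted_list_of_multiset (mset_set S)))"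
  proof (rule sum.reindex[unfolded o_def])
    show "inj_on mset_set ?SS"
    proof (rule inj_onI)
      fix S T assume "S \<in> ?SS" "T \<in> ?SS" "mset_set S = mset_set T"
      thus "S = T" using finS by (metis finite_set_mset_mset_set)
    qed
  qed
  also have "\<dots> = (\<Sum>S\<in>?SS. g (sorted_list_of_set S))"
    by (simp add: sorted_list_of_mset_set)
  finally show ?thesis .
qed

theorem theorem5p1:
  fixes z :: "nat \<Rightarrow> 'a::comm_ring_1" and n k :: nat
  assumes "n \<ge> 2" and "k \<ge> 1"
  shows "(\<Sum>\<beta>\<in>Pairs k n. (det (R3 z (sorted_list_of_multiset \<beta>)))^2)
         = of_nat n ^ (k - 1) * (\<Sum>b\<in>Cset (k+1) n. (Dz z b)^2)"
proof -
  define a where "a = (\<lambda>u (t::nat\<times>nat). z (fst t) ^ (u+1) - z (snd t) ^ (u+1))"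
  define SS where "SS = {S. S \<subseteq> PP n \<and> card S = k}"
  define f where "f = (\<lambda>u v. \<Sum>i=1..n. z i ^ u * z i ^ v)"
  have R3det: "det (R3 z xs) = detf (length xs) (\<lambda>u v. a u (xs ! v))" for xs
    unfolding R3_def a_def by (rule det_mat_detf)
  have zero: "det (R3 z xs)^2 = 0" if nd: "\<not> distinct xs" for xs
  proof -
    obtain i j where ij: "i < length xs" "j < length xs" "i \<noteq> j" "xs ! i = xs ! j"
      using nd by (auto simp: distinct_conv_nth)
    have "det (R3 z xs) = 0"
      by (rule det_identical_columns[of _ "length xs" i j]) (use ij in \<open>auto simp: R3_def\<close>)
    thus ?thesis by simp
  qed
  have "(\<Sum>\<beta>\<in>Pairs k n. (det (R3 z (sorted_list_of_multiset \<beta>)))^2)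
      = (\<Sum>S\<in>SS. (det (R3 z (sorted_list_of_set S)))^2)"
    unfolding SS_def by (rule Pairs_reduce[where g = "\<lambda>xs. det (R3 z xs)^2"]) (rule zero)
  also have "\<dots> = (\<Sum>S\<in>SS. detf k (\<lambda>u v. a u (sorted_list_of_set S ! v))
                        * detf k (\<lambda>u v. a v (sorted_list_of_set S ! u)))"
  proof (rule sum.cong[OF refl])
    fix S assume S: "S \<in> SS"
    have "finite S" using S PP_finite unfolding SS_def by (auto intro: finite_subset)
    hence len: "length (sorted_list_of_set S) = k" using S unfolding SS_def by simp
    show "det (R3 z (sorted_list_of_set S))^2 = detf k (\<lambda>u v. a u (sorted_list_of_set S ! v))
                        * detf k (\<lambda>u v. a v (sorted_list_of_set S ! u))"
      unfolding R3det len power2_eq_square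
      using detf_transpose[of k "\<lambda>u v. a u (sorted_list_of_set S ! v)"] by simp
  qed
  also have "\<dots> = detf k (\<lambda>u v. \<Sum>t\<in>PP n. a u t * a v t)"
    unfolding SS_def by (rule cauchy_binet[OF PP_finite, symmetric])
  also have "\<dots> = detf k (\<lambda>u v. f 0 0 * f (Suc u) (Suc v) - f (Suc u) 0 * f 0 (Suc v))"
  proof (rule detf_cong)
    fix u v
    have "(\<Sum>t\<in>PP n. a u t * a v t)
       = (\<Sum>(i,j)\<in>PP n. (z i ^ (u+1) - z j ^ (u+1)) * (z i ^ (v+1) - z j ^ (v+1)))"
      unfolding a_def by (simp add: case_prod_beta')
    also have "\<dots> = of_nat n * (\<Sum>i=1..n. z i ^ (u+1) * z i ^ (v+1))
        - (\<Sum>i=1..n. z i ^ (u+1)) * (\<Sum>i=1..n. z i ^ (v+1))"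
      by (rule pair_sum)
    also have "\<dots> = f 0 0 * f (Suc u) (Suc v) - f (Suc u) 0 * f 0 (Suc v)"
      unfolding f_def by simp
    finally show "(\<Sum>t\<in>PP n. a u t * a v t) = f 0 0 * f (Suc u) (Suc v) - f (Suc u) 0 * f 0 (Suc v)" .
  qed
  also have "\<dots> = f 0 0 ^ (k - 1) * detf (Suc k) f"
    by (rule chio[OF assms(2)])
  also have "f 0 0 = of_nat n" unfolding f_def by simp
  also have "detf (Suc k) f = (\<Sum>b\<in>Cset (k+1) n. detf (Suc k) (\<lambda>u v. z (sorted_list_of_set b ! v) ^ u)
                        * detf (Suc k) (\<lambda>u v. z (sorted_list_of_set b ! u) ^ v))"
    unfolding f_def Cset_def using cauchy_binet[of "{1..n}" "Suc k" "\<lambda>u i. z i ^ u" "\<lambda>u i. z i ^ u"]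
    by simp
  also have "\<dots> = (\<Sum>b\<in>Cset (k+1) n. (Dz z b)^2)"
  proof (rule sum.cong[OF refl])
    fix b assume b: "b \<in> Cset (k+1) n"
    have fb: "finite b" using b unfolding Cset_def by (auto intro: finite_subset)
    have cb: "card b = Suc k" using b unfolding Cset_def by simp
    have V: "detf (Suc k) (\<lambda>u v. z (sorted_list_of_set b ! v) ^ u) = Dz z b"
      using vandermonde[of "Suc k" "\<lambda>j. z (sorted_list_of_set b ! j)"] Dz_sorted[OF fb cb, of z]
      by simp
    show "detf (Suc k) (\<lambda>u v. z (sorted_list_of_set b ! v) ^ u)
                        * detf (Suc k) (\<lambda>u v. z (sorted_list_of_set b ! u) ^ v) = (Dz z b)^2"
      using detf_transpose[of "Suc k" "\<lambda>u v. z (sorted_list_of_set b ! v) ^ u"] V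
      by (simp add: power2_eq_square)
  qed
  finally show ?thesis by simp
qed

end
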